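(* Let $R_1,\dots,R_M\subseteq\mathbb{R}^N$ be finitely many pairwise disjoint sets whose union is $\mathbb{R}^N$, and let $f:\mathbb{R}^N\to\mathbb{R}$ be continuous such that for each $i$, $|f(x)-f(y)|\le\|x-y\|$ for all $x,y\in R_i$. Then $|f(x)-f(y)|\le\|x-y\|$ for all $x,y\in\mathbb{R}^N$.
   Context: $\|\cdot\|$ is the Euclidean norm. No measurability or regularity of the sets $R_i$ is assumed. *)

theory Defs
  imports "HOL-Analysis.Analysis"
begin

end

theory Submission
  imports Defs
begin

lemma seg_key:
  fixes C :: "nat \<Rightarrow> 'a::euclidean_space set" and f :: "'a \<Rightarrow> real"
  assumes "finite I" and cl: "\<forall>i. closed (C i)"
    and lp: "\<forall>i. \<forall>x\<in>C i. \<forall>y\<in>C i. \<bar>f x - f y\<bar> \<le> dist x y"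
  shows "closed_segment x y \<subseteq> (\<Union>i\<in>I. C i) \<Longrightarrow> \<bar>f x - f y\<bar> \<le> dist x y"
  using assms(1)
proof (induction I arbitrary: x y rule: finite_psubset_induct)
  case (psubset I)
  have "x \<in> closed_segment x y" by simp
  with psubset.prems obtain i where iI: "i \<in> I" and xi: "x \<in> C i" by blast
  define T where "T = closed_segment x y \<inter> C i"
  have "compact T" unfolding T_def using cl by (simp add: compact_Int_closed)
  moreover have "T \<noteq> {}" using xi unfolding T_def by auto
  ultimately obtain p where pT: "p \<in> T" and pmax: "\<forall>z\<in>T. dist x z \<le> dist x p"
    using distance_attains_sup by blast
  have pseg: "p \<in> closed_segment x y" and pC: "p \<in> C i" using pT T_def by auto
  have fxp: "\<bar>f x - f p\<bar> \<le> dist x p" using lp xi pC by blast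
  have between: "dist x y = dist x p + dist p y"
    using pseg between between_mem_segment by blast
  show ?case
  proof (cases "p = y")
    case True then show ?thesis using fxp by simp
  next
    case False
    have sub: "open_segment p y \<subseteq> (\<Union>j\<in>I - {i}. C j)"
    proof
      fix z assume z: "z \<in> open_segment p y"
      have zseg: "z \<in> closed_segment x y"
        using z pseg by (meson open_closed_segment subset_closed_segment ends_in_segment(2) subsetD)
      have "dist z y < dist p y" using dist_in_open_segment[OF z] by (simp add: dist_commute)
      moreover have "dist x y \<le> dist x z + dist z y" by (rule dist_triangle)
      ultimately have "dist x z > dist x p" using between by linarith
      hence "z \<notin> C i" using pmax zseg T_def by force
      moreover obtain j where "j \<in> I" "z \<in> C j" using zseg psubset.prems by blast
      ultimately show "z \<in> (\<Union>j\<in>I - {i}. C j)" by blast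
    qed
    have "closed (\<Union>j\<in>I - {i}. C j)" using cl psubset.hyps by auto
    hence "closure (open_segment p y) \<subseteq> (\<Union>j\<in>I - {i}. C j)"
      using sub closure_minimal by blast
    hence "closed_segment p y \<subseteq> (\<Union>j\<in>I - {i}. C j)" using False by simp
    hence "\<bar>f p - f y\<bar> \<le> dist p y"
      using psubset.IH[of "I - {i}"] iI by blast
    then show ?thesis using fxp between by linarith
  qed
qed

lemma lip_closure:
  fixes f :: "'a::metric_space \<Rightarrow> real"
  assumes cont: "continuous_on UNIV f"
    and lp: "\<forall>x\<in>A. \<forall>y\<in>A. \<bar>f x - f y\<bar> \<le> dist x y"
  shows "\<forall>x\<in>closure A. \<forall>y\<in>closure A. \<bar>f x - f y\<bar> \<le> dist x y"
proof -
  have cl1: "closed {y. \<bar>f x - f y\<bar> \<le> dist x y}" for x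
    by (intro closed_Collect_le continuous_intros continuous_on_subset[OF cont]) auto
  have cl2: "closed {x. \<bar>f x - f y\<bar> \<le> dist x y}" for y
    by (intro closed_Collect_le continuous_intros continuous_on_subset[OF cont]) auto
  have s1: "\<forall>x\<in>A. \<forall>y\<in>closure A. \<bar>f x - f y\<bar> \<le> dist x y"
  proof (intro ballI)
    fix x y assume "x \<in> A" "y \<in> closure A"
    have "A \<subseteq> {y. \<bar>f x - f y\<bar> \<le> dist x y}" using lp \<open>x \<in> A\<close> by blast
    hence "closure A \<subseteq> {y. \<bar>f x - f y\<bar> \<le> dist x y}" using closure_minimal cl1 by blast
    then show "\<bar>f x - f y\<bar> \<le> dist x y" using \<open>y \<in> closure A\<close> by blast
  qed
  show ?thesis
  proof (intro ballI)
    fix x y assume "x \<in> closure A" "y \<in> closure A"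
    have "A \<subseteq> {x. \<bar>f x - f y\<bar> \<le> dist x y}" using s1 \<open>y \<in> closure A\<close> by blast
    hence "closure A \<subseteq> {x. \<bar>f x - f y\<bar> \<le> dist x y}" using closure_minimal cl2 by blast
    then show "\<bar>f x - f y\<bar> \<le> dist x y" using \<open>x \<in> closure A\<close> by blast
  qed
qed

theorem mainTheorem12:
  fixes R :: "nat \<Rightarrow> (real ^ 'n) set" and M :: nat and f :: "real ^ 'n \<Rightarrow> real"
  assumes disj: "\<And>i j. i \<in> {1..M} \<Longrightarrow> j \<in> {1..M} \<Longrightarrow> i \<noteq> j \<Longrightarrow> R i \<inter> R j = {}"
    and cover: "(\<Union>i\<in>{1..M}. R i) = UNIV"
    and cont: "continuous_on UNIV f"
    and lip: "\<And>i x y. i \<in> {1..M} \<Longrightarrow> x \<in> R i \<Longrightarrow> y \<in> R i \<Longrightarrow> \<bar>f x - f y\<bar> \<le> norm (x - y)"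
  shows "\<forall>x y. \<bar>f x - f y\<bar> \<le> norm (x - y)"
proof (intro allI)
  fix x y :: "real ^ 'n"
  define C where "C i = (if i \<in> {1..M} then closure (R i) else {})" for i
  have cl: "\<forall>i. closed (C i)" by (simp add: C_def)
  have lp: "\<forall>i. \<forall>x\<in>C i. \<forall>y\<in>C i. \<bar>f x - f y\<bar> \<le> dist x y"
  proof
    fix i show "\<forall>x\<in>C i. \<forall>y\<in>C i. \<bar>f x - f y\<bar> \<le> dist x y"
    proof (cases "i \<in> {1..M}")
      case True
      have "\<forall>x\<in>R i. \<forall>y\<in>R i. \<bar>f x - f y\<bar> \<le> dist x y" using lip True by (simp add: dist_norm)
      from lip_closure[OF cont this] show ?thesis using True by (simp add: C_def)
    next
      case False have "C i = {}" unfolding C_def by (rule if_not_P[OF False])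
      then show ?thesis by (simp only: empty_iff ball_simps)
    qed
  qed
  have "closed_segment x y \<subseteq> (\<Union>i\<in>{1..M}. C i)"
  proof
    fix z assume "z \<in> closed_segment x y"
    have "z \<in> (\<Union>i\<in>{1..M}. R i)" using cover by simp
    then obtain i where i: "i \<in> {1..M}" "z \<in> R i" by blast
    have "z \<in> C i" using i closure_subset unfolding C_def by auto
    then show "z \<in> (\<Union>i\<in>{1..M}. C i)" using i by blast
  qed
  from seg_key[OF _ cl lp this] show "\<bar>f x - f y\<bar> \<le> norm (x - y)" by (simp add: dist_norm)
qed

end
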